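(* Let $q=r^2$ where $r$ is a prime power and let $s$ be a positive integer. Let $C_1,\dots,C_s$ be linear codes of the same length $m$ over $\mathbb{F}_q$. If $A\in M_{s,s}(\mathbb{F}_q)$ satisfies $AA^\dagger=\lambda J_s$ for some nonzero $\lambda\in\mathbb{F}_q$ and $C_i=C_{s-i+1}^{\perp_H}$ for all $1\le i\le s$, then the matrix-product code $C_A=[C_1,\dots,C_s]\cdot A$ is Hermitian self-dual, i.e., $C_A=C_A^{\perp_H}$.
   Context: For $a\in\mathbb{F}_q$, $\overline{a}:=a^r$. For a matrix $A=[a_{ij}]$ over $\mathbb{F}_q$, $A^\dagger:=[\overline{a_{ji}}]$. $J_s$ is the $s\times s$ anti-diagonal matrix with all anti-diagonal entries equal to $1$ and all other entries $0$. The Hermitian inner product on $\mathbb{F}_q^n$ is $\langle u,v\rangle_H=\sum_i u_i\overline{v_i}$, and $C^{\perp_H}$ is the dual of $C$ with respect to it. If $C_i$ has generator matrix $G_i$ and $A=[a_{ij}]\in M_{s,l}(\mathbb{F}_q)$, the matrix-product code $[C_1,\dots,C_s]\cdot A$ is the linear code of length $ml$ generated by the block matrix whose $(i,j)$ block is $a_{ij}G_i$. *)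

theory Defs
  imports Main "HOL-Computational_Algebra.Primes"
begin

text \<open>Vectors of length n over a field: functions nat => 'a vanishing at indices >= n
  (coordinates 0..n-1).\<close>
definition vecs :: "nat \<Rightarrow> (nat \<Rightarrow> 'a::zero) set" where
  "vecs n = {x. \<forall>i\<ge>n. x i = 0}"

definition linear_code :: "nat \<Rightarrow> (nat \<Rightarrow> 'a::field) set \<Rightarrow> bool" where
  "linear_code n C \<longleftrightarrow> C \<subseteq> vecs n \<and> (\<lambda>_. 0) \<in> C \<and>
     (\<forall>x\<in>C. \<forall>y\<in>C. (\<lambda>i. x i + y i) \<in> C) \<and>
     (\<forall>c. \<forall>x\<in>C. (\<lambda>i. c * x i) \<in> C)"

definition hconj :: "nat \<Rightarrow> 'a::field \<Rightarrow> 'a" where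
  "hconj r a = a ^ r"

definition herm_ip :: "nat \<Rightarrow> nat \<Rightarrow> (nat \<Rightarrow> 'a::field) \<Rightarrow> (nat \<Rightarrow> 'a) \<Rightarrow> 'a" where
  "herm_ip r n u v = (\<Sum>i<n. u i * hconj r (v i))"

definition herm_dual :: "nat \<Rightarrow> nat \<Rightarrow> (nat \<Rightarrow> 'a::field) set \<Rightarrow> (nat \<Rightarrow> 'a) set" where
  "herm_dual r n C = {v \<in> vecs n. \<forall>u\<in>C. herm_ip r n u v = 0}"

definition antidiag :: "nat \<Rightarrow> nat \<Rightarrow> nat \<Rightarrow> 'a::field" where
  "antidiag s i j = (if i < s \<and> j < s \<and> i + j = s - 1 then 1 else 0)"

definition mult_dagger :: "nat \<Rightarrow> nat \<Rightarrow> (nat \<Rightarrow> nat \<Rightarrow> 'a::field) \<Rightarrow> nat \<Rightarrow> nat \<Rightarrow> 'a" where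
  "mult_dagger r l A i j = (\<Sum>k<l. A i k * hconj r (A j k))"

text \<open>It is the row space of the block matrix with blocks a_ij G_i, i.e. the set of
  concatenations (sum_i a_i0 c_i | ... | sum_i a_i(l-1) c_i) with c_i in C_i;
  block j occupies coordinates j*m .. j*m+m-1.\<close>
definition matrix_product_code ::
  "nat \<Rightarrow> nat \<Rightarrow> nat \<Rightarrow> (nat \<Rightarrow> (nat \<Rightarrow> 'a::field) set) \<Rightarrow> (nat \<Rightarrow> nat \<Rightarrow> 'a) \<Rightarrow> (nat \<Rightarrow> 'a) set" where
  "matrix_product_code m s l C A =
     {x. \<exists>c. (\<forall>i<s. c i \<in> C i) \<and>
          x = (\<lambda>p. if p < m * l then (\<Sum>i<s. A i (p div m) * c i (p mod m)) else 0)}"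

end

theory Submission imports Defs "Jordan_Normal_Form.Determinant" "HOL-Number_Theory.Residues" begin

lemma sum_split_blocks:
  fixes m s :: nat
  shows "(\<Sum>p<m*s. f p) = (\<Sum>j<s. \<Sum>t<m. f (j*m+t))"
proof (induction s)
  case 0 then show ?case by simp
next
  case (Suc s)
  have "(\<Sum>p<m*Suc s. f p) = (\<Sum>p<m*s. f p) + (\<Sum>p\<in>{m*s..<m*s+m}. f p)"
    by (simp add: lessThan_atLeast0 sum.atLeastLessThan_concat add.commute)
  also have "(\<Sum>p\<in>{m*s..<m*s+m}. f p) = (\<Sum>t<m. f (s*m+t))"
    by (rule sum.reindex_bij_witness[of _ "\<lambda>t. m*s+t" "\<lambda>p. p - m*s"]) (auto simp: mult.commute)
  finally show ?case using Suc by simp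
qed


lemma sum4_perm:
  "(\<Sum>j\<in>J. \<Sum>t\<in>T. \<Sum>i\<in>I. \<Sum>k\<in>K. F i k j t) = (\<Sum>i\<in>I. \<Sum>k\<in>K. \<Sum>j\<in>J. \<Sum>t\<in>T. F i k j t)"
proof -
  have "(\<Sum>j\<in>J. \<Sum>t\<in>T. \<Sum>i\<in>I. \<Sum>k\<in>K. F i k j t) = (\<Sum>j\<in>J. \<Sum>i\<in>I. \<Sum>t\<in>T. \<Sum>k\<in>K. F i k j t)"
    by (rule sum.cong[OF refl], rule sum.swap)
  also have "\<dots> = (\<Sum>j\<in>J. \<Sum>i\<in>I. \<Sum>k\<in>K. \<Sum>t\<in>T. F i k j t)"
    by (rule sum.cong[OF refl], rule sum.cong[OF refl], rule sum.swap)
  also have "\<dots> = (\<Sum>i\<in>I. \<Sum>j\<in>J. \<Sum>k\<in>K. \<Sum>t\<in>T. F i k j t)"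
    by (rule sum.swap)
  also have "\<dots> = (\<Sum>i\<in>I. \<Sum>k\<in>K. \<Sum>j\<in>J. \<Sum>t\<in>T. F i k j t)"
    by (rule sum.cong[OF refl], rule sum.swap)
  finally show ?thesis .
qed

lemma block_idx:
  fixes j t m s :: nat
  assumes "j < s" "t < m"
  shows "j*m+t < m*s" "(j*m+t) div m = j" "(j*m+t) mod m = t"
proof -
  have "Suc j \<le> s" using assms by simp
  then have "Suc j * m \<le> s * m" by (rule mult_le_mono1)
  then show "j*m+t < m*s" using assms by (simp add: mult.commute)
  show "(j*m+t) div m = j" using assms by simp
  show "(j*m+t) mod m = t" using assms by simp
qed

lemma main_gen:
  fixes C :: "nat \<Rightarrow> (nat \<Rightarrow> 'a::field) set"
    and A :: "nat \<Rightarrow> nat \<Rightarrow> 'a"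
    and r s m :: nat and lam :: 'a
  assumes hadd: "\<And>x y :: 'a. (x + y) ^ r = x ^ r + y ^ r"
    and hinv: "\<And>x :: 'a. (x ^ r) ^ r = x"
    and rpos: "r > 0"
    and spos: "s > 0"
    and lin: "\<forall>i<s. linear_code m (C i)"
    and lam: "lam \<noteq> 0"
    and AA: "\<forall>i<s. \<forall>j<s. mult_dagger r s A i j = lam * antidiag s i j"
    and dual: "\<forall>i<s. C i = herm_dual r m (C (s - 1 - i))"
  shows "matrix_product_code m s s C A = herm_dual r (m * s) (matrix_product_code m s s C A)"
proof -
  have hconj_add: "hconj r (x + y) = hconj r x + hconj r y" for x y :: 'a
    by (simp add: hconj_def hadd)
  have hconj_mult: "hconj r (x * y) = hconj r x * hconj r y" for x y :: 'a
    by (simp add: hconj_def power_mult_distrib)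
  have hconj_zero: "hconj r (0::'a) = 0"
    using rpos by (simp add: hconj_def)
  have hconj_hconj: "hconj r (hconj r x) = x" for x :: 'a
    by (simp add: hconj_def hinv)
  have hconj_sum: "hconj r (\<Sum>i\<in>I. f i) = (\<Sum>i\<in>I. hconj r (f i))" for I and f :: "'b \<Rightarrow> 'a"
    by (induction I rule: infinite_finite_induct) (auto simp: hconj_add hconj_zero)
  have hconj_inverse: "hconj r (inverse x) = inverse (hconj r x)" for x :: 'a
    by (simp add: hconj_def power_inverse)
  define cw where "cw c = (\<lambda>p. if p < m*s then \<Sum>i<s. A i (p div m) * c i (p mod m) else (0::'a))"
    for c :: "nat \<Rightarrow> nat \<Rightarrow> 'a"
  define P where "P = matrix_product_code m s s C A"
  have P_eq: "P = {x. \<exists>c. (\<forall>i<s. c i \<in> C i) \<and> x = cw c}"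
    by (simp add: P_def matrix_product_code_def cw_def)
  have cw_exp: "cw c (j*m+t) = (\<Sum>i<s. A i j * c i t)" if "j<s" "t<m" for c j t
    using block_idx[OF that] by (simp add: cw_def)
  have ipcw: "herm_ip r (m*s) (cw c) y = (\<Sum>j<s. \<Sum>t<m. (\<Sum>i<s. A i j * c i t) * hconj r (y (j*m+t)))"
    for c y
    unfolding herm_ip_def sum_split_blocks
    by (intro sum.cong refl) (simp add: cw_exp)
  have ipcw2: "herm_ip r (m*s) (cw c) (cw d) = lam * (\<Sum>i<s. herm_ip r m (c i) (d (s-1-i)))" for c d
  proof -
    have "herm_ip r (m*s) (cw c) (cw d) =
        (\<Sum>j<s. \<Sum>t<m. \<Sum>i<s. \<Sum>k<s. A i j * c i t * (hconj r (A k j) * hconj r (d k t)))"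
      unfolding ipcw
      by (intro sum.cong refl) (simp add: cw_exp hconj_sum hconj_mult sum_product)
    also have "\<dots> = (\<Sum>i<s. \<Sum>k<s. \<Sum>j<s. \<Sum>t<m. A i j * c i t * (hconj r (A k j) * hconj r (d k t)))"
      by (rule sum4_perm)
    also have "\<dots> = (\<Sum>i<s. \<Sum>k<s. mult_dagger r s A i k * herm_ip r m (c i) (d k))"
      unfolding mult_dagger_def herm_ip_def sum_product
      by (intro sum.cong refl) (simp add: mult_ac)
    also have "\<dots> = (\<Sum>i<s. lam * herm_ip r m (c i) (d (s-1-i)))"
    proof (rule sum.cong[OF refl])
      fix i assume i: "i \<in> {..<s}"
      have "(\<Sum>k<s. mult_dagger r s A i k * herm_ip r m (c i) (d k))
          = (\<Sum>k<s. if k = s-1-i then lam * herm_ip r m (c i) (d k) else 0)"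
        using i AA by (intro sum.cong refl) (auto simp: antidiag_def)
      also have "\<dots> = lam * herm_ip r m (c i) (d (s-1-i))"
        using i by (simp add: sum.delta)
      finally show "(\<Sum>k<s. mult_dagger r s A i k * herm_ip r m (c i) (d k))
          = lam * herm_ip r m (c i) (d (s-1-i))" .
    qed
    also have "\<dots> = lam * (\<Sum>i<s. herm_ip r m (c i) (d (s-1-i)))"
      by (simp add: sum_distrib_left)
    finally show ?thesis .
  qed
  have "P \<subseteq> herm_dual r (m*s) P"
  proof
    fix x assume "x \<in> P"
    then obtain c where c: "\<forall>i<s. c i \<in> C i" and x: "x = cw c" by (auto simp: P_eq)
    have "x \<in> vecs (m*s)" by (simp add: x cw_def vecs_def)
    moreover have "herm_ip r (m*s) u x = 0" if "u \<in> P" for u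
    proof -
      from that obtain c' where c': "\<forall>i<s. c' i \<in> C i" and u: "u = cw c'" by (auto simp: P_eq)
      have "herm_ip r m (c' i) (c (s-1-i)) = 0" if i: "i < s" for i
      proof -
        have "c (s-1-i) \<in> C (s-1-i)" using c i by simp
        also have "C (s-1-i) = herm_dual r m (C (s-1-(s-1-i)))"
          using dual[rule_format, of "s-1-i"] i by linarith
        also have "s-1-(s-1-i) = i" using i by simp
        finally show ?thesis using c' i by (auto simp: herm_dual_def)
      qed
      then show ?thesis by (simp add: u x ipcw2)
    qed
    ultimately show "x \<in> herm_dual r (m*s) P" by (simp add: herm_dual_def)
  qed
  note sub = this
  have MN: "(\<Sum>k<s. A i k * (hconj r (A (s-1-j) k) / lam)) = (if i = j then 1 else 0)"
    if "i < s" "j < s" for i j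
  proof -
    have "(\<Sum>k<s. A i k * (hconj r (A (s-1-j) k) / lam)) = mult_dagger r s A i (s-1-j) / lam"
      by (simp add: mult_dagger_def sum_divide_distrib)
    also have "\<dots> = antidiag s i (s-1-j)"
      using AA that lam by simp
    also have "\<dots> = (if i = j then 1 else 0)"
      using that by (auto simp: antidiag_def)
    finally show ?thesis .
  qed
  define M where "M = mat s s (\<lambda>(i,j). A i j)"
  define N where "N = mat s s (\<lambda>(i,j). hconj r (A (s-1-j) i) / lam)"
  have Mc: "M \<in> carrier_mat s s" by (simp add: M_def)
  have Nc: "N \<in> carrier_mat s s" by (simp add: N_def)
  have MN1: "M * N = 1\<^sub>m s"
    by (rule eq_matI) (auto simp: M_def N_def scalar_prod_def atLeast0LessThan MN[simplified])
  have NM1: "N * M = 1\<^sub>m s"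
    by (rule mat_mult_left_right_inverse[OF Mc Nc MN1])
  have NM: "(\<Sum>k<s. (hconj r (A (s-1-k) i) / lam) * A k j) = (if i = j then 1 else 0)"
    if "i < s" "j < s" for i j
  proof -
    have "(N * M) $$ (i,j) = (1\<^sub>m s :: 'a mat) $$ (i,j)" using NM1 by simp
    then show ?thesis using that by (simp add: M_def N_def scalar_prod_def atLeast0LessThan)
  qed
  have "herm_dual r (m*s) P \<subseteq> P"
  proof
    fix y assume y: "y \<in> herm_dual r (m*s) P"
    then have yv: "y \<in> vecs (m*s)" and yo: "\<And>u. u \<in> P \<Longrightarrow> herm_ip r (m*s) u y = 0"
      by (auto simp: herm_dual_def)
    define d where "d i t = (if t < m then (\<Sum>j<s. (hconj r (A (s-1-i) j) / lam) * y (j*m+t)) else 0)"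
      for i t
    have dC: "d i \<in> C i" if i: "i < s" for i
    proof -
      have si: "s-1-i < s" using i by simp
      have Ci: "C i = herm_dual r m (C (s-1-i))" using dual i by blast
      have "herm_ip r m u (d i) = 0" if u: "u \<in> C (s-1-i)" for u
      proof -
        define c' where "c' = (\<lambda>i'. if i' = s-1-i then u else (\<lambda>_. 0::'a))"
        have "\<forall>i'<s. c' i' \<in> C i'"
          using lin u by (auto simp: c'_def linear_code_def)
        then have "cw c' \<in> P" by (auto simp: P_eq)
        then have z: "herm_ip r (m*s) (cw c') y = 0" by (rule yo)
        have cs: "(\<Sum>i'<s. A i' j * c' i' t) = A (s-1-i) j * u t" for j t
        proof -
          have "(\<Sum>i'<s. A i' j * c' i' t) = (\<Sum>i'<s. if i' = s-1-i then A i' j * u t else 0)"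
            by (intro sum.cong refl) (simp add: c'_def)
          also have "\<dots> = A (s-1-i) j * u t" using si by (simp add: sum.delta)
          finally show ?thesis .
        qed
        have "herm_ip r m u (d i) = (\<Sum>t<m. \<Sum>j<s. hconj r (inverse lam) * (A (s-1-i) j * u t * hconj r (y (j*m+t))))"
          unfolding herm_ip_def d_def
          by (intro sum.cong refl)
             (simp add: hconj_sum hconj_mult hconj_hconj hconj_inverse divide_inverse sum_distrib_left mult_ac)
        also have "\<dots> = hconj r (inverse lam) * (\<Sum>j<s. \<Sum>t<m. A (s-1-i) j * u t * hconj r (y (j*m+t)))"
          by (simp add: sum_distrib_left sum.swap[where A="{..<m}"])
        also have "(\<Sum>j<s. \<Sum>t<m. A (s-1-i) j * u t * hconj r (y (j*m+t))) = herm_ip r (m*s) (cw c') y"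
          unfolding ipcw cs by simp
        finally show ?thesis using z by simp
      qed
      moreover have "d i \<in> vecs m" by (simp add: vecs_def d_def)
      ultimately show ?thesis using Ci by (simp add: herm_dual_def)
    qed
    have "y = cw d"
    proof
      fix p
      show "y p = cw d p"
      proof (cases "p < m*s")
        case False
        then show ?thesis using yv by (simp add: vecs_def cw_def)
      next
        case True
        then have m0: "m > 0" by (cases m) auto
        define j where "j = p div m"
        define t where "t = p mod m"
        have jt: "j < s" "t < m" "p = j*m+t"
          using True m0 by (auto simp: j_def t_def less_mult_imp_div_less mult.commute)
        have "cw d p = (\<Sum>i<s. A i j * d i t)" using cw_exp[OF jt(1,2)] jt(3) by simp
        also have "\<dots> = (\<Sum>i<s. \<Sum>j'<s. (hconj r (A (s-1-i) j') / lam) * A i j * y (j'*m+t))"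
          using jt by (simp add: d_def sum_distrib_left mult_ac)
        also have "\<dots> = (\<Sum>j'<s. \<Sum>i<s. (hconj r (A (s-1-i) j') / lam) * A i j * y (j'*m+t))"
          by (rule sum.swap)
        also have "\<dots> = (\<Sum>j'<s. (\<Sum>i<s. (hconj r (A (s-1-i) j') / lam) * A i j) * y (j'*m+t))"
          by (simp add: sum_distrib_right)
        also have "\<dots> = (\<Sum>j'<s. if j' = j then y (j'*m+t) else 0)"
          using NM jt by (intro sum.cong refl) auto
        also have "\<dots> = y p" using jt by (simp add: sum.delta')
        finally show ?thesis by simp
      qed
    qed
    then show "y \<in> P" using dC by (auto simp: P_eq)
  qed
  with sub show ?thesis by (simp add: P_def)
qed


lemma ff_power_card:
  fixes x :: "'a :: {field,finite}"
  shows "x ^ card (UNIV :: 'a set) = x"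
proof (cases "x = 0")
  case False
  have "x * (\<Prod>y\<in>UNIV-{0}. x * y) = x * x ^ (card (UNIV :: 'a set) - 1) * \<Prod>(UNIV-{0})"
    by (simp add: prod.distrib mult_ac)
  also have "x * x ^ (card (UNIV :: 'a set) - 1) = x ^ Suc (card (UNIV :: 'a set) - 1)"
    by (subst power_Suc) auto
  also have "Suc (card (UNIV :: 'a set) - 1) = card (UNIV :: 'a set)"
    using finite_UNIV_card_ge_0[where ?'a = 'a] by simp
  also have "(\<Prod>y\<in>UNIV-{0}. x * y) = (\<Prod>y\<in>UNIV-{0}. y)"
    by (rule prod.reindex_bij_witness[of _ "\<lambda>y. y / x" "\<lambda>y. x * y"]) (use False in auto)
  finally show ?thesis
    by simp
qed (use finite_UNIV_card_ge_0[where ?'a = 'a] in auto)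

theorem corollary3p3:
  fixes C :: "nat \<Rightarrow> (nat \<Rightarrow> 'a::{field,finite}) set"
    and A :: "nat \<Rightarrow> nat \<Rightarrow> 'a"
    and r s m :: nat and lam :: 'a and p k :: nat
  assumes "prime p" and "k > 0" and "r = p ^ k"
    and "card (UNIV :: 'a set) = r ^ 2"
    and "s > 0"
    and "\<forall>i<s. linear_code m (C i)"
    and "lam \<noteq> 0"
    and "\<forall>i<s. \<forall>j<s. mult_dagger r s A i j = lam * antidiag s i j"
    and "\<forall>i<s. C i = herm_dual r m (C (s - 1 - i))"
  shows "matrix_product_code m s s C A = herm_dual r (m * s) (matrix_product_code m s s C A)"
proof -
  have fin: "finite (UNIV::'a set)" by simp
  have cp: "prime CHAR('a)"
    using prime_CHAR_semidom finite_imp_CHAR_pos[OF fin] by blast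
  have "CHAR('a) dvd card (UNIV :: 'a set)" by (rule CHAR_dvd_CARD)
  then have "CHAR('a) dvd p ^ (k * 2)" using assms(3,4) by (simp add: power_mult)
  then have "CHAR('a) dvd p" by (rule prime_dvd_power[OF cp])
  then have cpp: "CHAR('a) = p" using primes_dvd_imp_eq cp assms(1) by blast
  have hadd: "(x + y) ^ r = x ^ r + y ^ r" for x y :: 'a
    by (rule freshmans_dream'[OF cp]) (simp add: cpp assms(3))
  have hinv: "(x ^ r) ^ r = x" for x :: 'a
  proof -
    have "(x ^ r) ^ r = x ^ (r ^ 2)" by (simp add: power_mult[symmetric] power2_eq_square)
    also have "\<dots> = x" using ff_power_card[of x] assms(4) by simp
    finally show ?thesis .
  qed
  have rpos: "r > 0" using assms(1,3) prime_gt_0_nat by simp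
  show ?thesis
    by (rule main_gen[OF hadd hinv rpos assms(5-9)])
qed
end
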